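(* Let $n\ge2$, $\omega\in\mathbb{R}^n$, $k\in\mathbb{R}_{>0}^n$ satisfy (IC1) $\sum_\mu\omega_\mu=0$, (IC2) $\omega\ne0$, (IC3) $\left|\frac{\omega_1}{k_1}\right|\le\cdots\le\left|\frac{\omega_n}{k_n}\right|$. Define $$g(R)=\prod_{\sigma\in\{-1,+1\}^n}\left(-R+\frac1n\sum_{\mu=1}^n\sigma_\mu\sqrt{k_\mu^2R-\omega_\mu^2}\right).$$ Then $g$ is a polynomial in $R$ of degree $2^n$, and there exists a polynomial $h(R)$ of degree $2^n-2$ with $g(R)=R^2\,h(R)$.
   Context: Here $R$ may be complex; for each $\mu$ any fixed choice of square root of $k_\mu^2R-\omega_\mu^2$ may be used, since the product runs over all sign choices and is therefore independent of the choice of branches. *)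

theory Defs
  imports "HOL-Analysis.Analysis" "HOL-Computational_Algebra.Polynomial"
begin

text \<open>Indices are 0,...,n-1 (the paper uses 1,...,n).
  The square root is the principal branch csqrt; the product is independent of the branch.\<close>

definition sign_vectors :: "nat \<Rightarrow> (nat \<Rightarrow> real) set" where
  "sign_vectors n = PiE {0..<n} (\<lambda>_. {-1, 1})"

definition gfun :: "nat \<Rightarrow> (nat \<Rightarrow> real) \<Rightarrow> (nat \<Rightarrow> real) \<Rightarrow> complex \<Rightarrow> complex" where
  "gfun n \<omega> k R = (\<Prod>\<sigma>\<in>sign_vectors n.
      - R + (1 / of_nat n) * (\<Sum>\<mu><n. of_real (\<sigma> \<mu>) *
         csqrt (of_real ((k \<mu>)\<^sup>2) * R - of_real ((\<omega> \<mu>)\<^sup>2))))"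

end

theory Submission
  imports Defs
begin

inductive mpf :: "((nat \<Rightarrow> complex) \<Rightarrow> complex) \<Rightarrow> bool" where
  mpf_const: "mpf (\<lambda>v. c)"
| mpf_var: "mpf (\<lambda>v. v i)"
| mpf_add: "mpf f \<Longrightarrow> mpf g \<Longrightarrow> mpf (\<lambda>v. f v + g v)"
| mpf_mult: "mpf f \<Longrightarrow> mpf g \<Longrightarrow> mpf (\<lambda>v. f v * g v)"

lemma mpf_subst:
  assumes "mpf f" "\<And>i. mpf (g i)"
  shows "mpf (\<lambda>v. f (\<lambda>i. g i v))"
  using assms(1)
proof induction
  case (mpf_const c) show ?case by (rule mpf.mpf_const)
next
  case (mpf_var i) show ?case using assms(2)[of i] by simp
next
  case (mpf_add f1 f2) show ?case using mpf_add.IH by (rule mpf.mpf_add)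
next
  case (mpf_mult f1 f2) show ?case using mpf_mult.IH by (rule mpf.mpf_mult)
qed

lemma mpf_univ:
  assumes "mpf f" shows "\<exists>p. \<forall>R. f (\<lambda>_. R) = poly p R"
  using assms
proof induction
  case (mpf_const c) show ?case by (rule exI[of _ "[:c:]"]) simp
next
  case (mpf_var i) show ?case by (rule exI[of _ "[:0,1:]"]) simp
next
  case (mpf_add f g) then obtain p q where "\<forall>R. f (\<lambda>_. R) = poly p R" "\<forall>R. g (\<lambda>_. R) = poly q R" by blast
  then show ?case by (intro exI[of _ "p+q"]) simp
next
  case (mpf_mult f g) then obtain p q where "\<forall>R. f (\<lambda>_. R) = poly p R" "\<forall>R. g (\<lambda>_. R) = poly q R" by blast
  then show ?case by (intro exI[of _ "p*q"]) simp
qed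

lemma mpf_even:
  assumes "mpf f"
  shows "\<exists>E Od. mpf E \<and> mpf Od \<and> (\<forall>v s. f (v(0 := v 0 + s)) = E (case_nat (s\<^sup>2) v) + s * Od (case_nat (s\<^sup>2) v))"
  using assms
proof induction
  case (mpf_const c) show ?case
    by (rule exI[of _ "\<lambda>v. c"], rule exI[of _ "\<lambda>v. 0"]) (simp add: mpf.intros)
next
  case (mpf_var i) show ?case
  proof (cases "i = 0")
    case True then show ?thesis
      by (intro exI[of _ "\<lambda>w. w 1"] exI[of _ "\<lambda>w. 1"]) (simp add: mpf.intros)
  next
    case False then show ?thesis
      by (intro exI[of _ "\<lambda>w. w (Suc i)"] exI[of _ "\<lambda>w. 0"]) (simp add: mpf.intros)
  qed
next
  case (mpf_add f g)
  then obtain E1 Q1 E2 Q2 where h: "mpf E1" "mpf Q1" "mpf E2" "mpf Q2"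
    "\<forall>v s. f (v(0 := v 0 + s)) = E1 (case_nat (s\<^sup>2) v) + s * Q1 (case_nat (s\<^sup>2) v)"
    "\<forall>v s. g (v(0 := v 0 + s)) = E2 (case_nat (s\<^sup>2) v) + s * Q2 (case_nat (s\<^sup>2) v)" by blast
  show ?case
    by (rule exI[of _ "\<lambda>w. E1 w + E2 w"], rule exI[of _ "\<lambda>w. Q1 w + Q2 w"])
      (simp only: h(5)[rule_format] h(6)[rule_format], simp add: h mpf.mpf_add algebra_simps)
next
  case (mpf_mult f g)
  then obtain E1 Q1 E2 Q2 where h: "mpf E1" "mpf Q1" "mpf E2" "mpf Q2"
    "\<forall>v s. f (v(0 := v 0 + s)) = E1 (case_nat (s\<^sup>2) v) + s * Q1 (case_nat (s\<^sup>2) v)"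
    "\<forall>v s. g (v(0 := v 0 + s)) = E2 (case_nat (s\<^sup>2) v) + s * Q2 (case_nat (s\<^sup>2) v)" by blast
  have m1: "mpf (\<lambda>w. E1 w * E2 w + w 0 * Q1 w * Q2 w)"
    using h by (intro mpf.intros)
  have m2: "mpf (\<lambda>w. E1 w * Q2 w + Q1 w * E2 w)"
    using h by (intro mpf.intros)
  show ?case
    by (rule exI[of _ "\<lambda>w. E1 w * E2 w + w 0 * Q1 w * Q2 w"], rule exI[of _ "\<lambda>w. E1 w * Q2 w + Q1 w * E2 w"])
      (intro conjI m1 m2 allI, simp only: h(5)[rule_format] h(6)[rule_format], simp add: h m1 m2 algebra_simps, simp add: power2_eq_square algebra_simps)
qed

lemma mpf_even2:
  assumes "mpf f"
  shows "\<exists>h. mpf h \<and> (\<forall>v s. f (v(0 := v 0 + s)) * f (v(0 := v 0 - s)) = h (case_nat (s\<^sup>2) v))"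
proof -
  obtain E Od where h: "mpf E" "mpf Od" "\<forall>v s. f (v(0 := v 0 + s)) = E (case_nat (s\<^sup>2) v) + s * Od (case_nat (s\<^sup>2) v)"
    using mpf_even[OF assms] by blast
  have m: "f (v(0 := v 0 - s)) = E (case_nat (s\<^sup>2) v) - s * Od (case_nat (s\<^sup>2) v)" for v s
    using h(3)[rule_format, of v "-s"] by simp
  have e: "f (v(0 := v 0 + s)) * f (v(0 := v 0 - s)) = E (case_nat (s\<^sup>2) v) * E (case_nat (s\<^sup>2) v) + (-1) * ((case_nat (s\<^sup>2) v) 0 * (Od (case_nat (s\<^sup>2) v) * Od (case_nat (s\<^sup>2) v)))" for v s
    unfolding m h(3)[rule_format] by (simp add: algebra_simps power2_eq_square)
  moreover have "mpf (\<lambda>w. E w * E w + (-1) * (w 0 * (Od w * Od w)))" using h by (intro mpf.intros)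
  ultimately show ?thesis
    by (intro exI[of _ "\<lambda>w. E w * E w + (-1) * (w 0 * (Od w * Od w))"]) auto
qed

lemma sv_Suc:
  "(\<Prod>\<sigma>\<in>sign_vectors (Suc m). F \<sigma>) = (\<Prod>\<sigma>\<in>sign_vectors m. F (\<sigma>(m := 1)) * F (\<sigma>(m := -1)))"
proof -
  have e: "sign_vectors (Suc m) = (\<lambda>(y, g). g(m := y)) ` ({-1,1} \<times> sign_vectors m)"
    unfolding sign_vectors_def by (simp add: atLeast0_lessThan_Suc PiE_insert_eq)
  have i: "inj_on (\<lambda>(y, g). g(m := y)) ({-1,1} \<times> sign_vectors m)"
    unfolding sign_vectors_def using inj_combinator[of m "{0..<m}" "\<lambda>_. {-1,1::real}"] by simp
  have "(\<Prod>\<sigma>\<in>sign_vectors (Suc m). F \<sigma>) = (\<Prod>x\<in>{-1,1} \<times> sign_vectors m. F ((\<lambda>(y, g). g(m := y)) x))"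
    unfolding e by (rule prod.reindex[OF i, unfolded comp_def])
  also have "\<dots> = (\<Prod>y\<in>{-1,1}. \<Prod>g\<in>sign_vectors m. F (g(m := y)))"
    by (simp add: prod.cartesian_product case_prod_beta)
  also have "\<dots> = (\<Prod>g\<in>sign_vectors m. \<Prod>y\<in>{-1,1}. F (g(m := y)))"
    by (rule prod.swap)
  also have "\<dots> = (\<Prod>\<sigma>\<in>sign_vectors m. F (\<sigma>(m := 1)) * F (\<sigma>(m := -1)))"
    by (simp add: mult.commute)
  finally show ?thesis .
qed

lemma sv_sum:
  fixes t :: "nat \<Rightarrow> complex"
  shows "(\<Sum>\<mu><Suc m. of_real ((\<sigma>(m := e)) \<mu>) * t \<mu>) = (\<Sum>\<mu><m. of_real (\<sigma> \<mu>) * t \<mu>) + of_real e * t m"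
  by (simp add: lessThan_Suc sum.insert)

lemma sv_prod_poly:
  assumes q: "\<And>\<mu>. mpf (\<lambda>v. q \<mu> (v 1))"
  shows "\<exists>f. mpf f \<and> (\<forall>X R t. (\<forall>\<mu><m. (t \<mu>)\<^sup>2 = q \<mu> R) \<longrightarrow>
     (\<Prod>\<sigma>\<in>sign_vectors m. X + (\<Sum>\<mu><m. of_real (\<sigma> \<mu>) * t \<mu>)) = f (\<lambda>i. if i = 0 then X else R))"
proof (induction m)
  case 0
  show ?case by (intro exI[of _ "\<lambda>v. v 0"]) (simp add: sign_vectors_def mpf.intros)
next
  case (Suc m)
  then obtain f where f: "mpf f" "\<forall>X R t. (\<forall>\<mu><m. (t \<mu>)\<^sup>2 = q \<mu> R) \<longrightarrow>
     (\<Prod>\<sigma>\<in>sign_vectors m. X + (\<Sum>\<mu><m. of_real (\<sigma> \<mu>) * t \<mu>)) = f (\<lambda>i. if i = 0 then X else R)" by blast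
  obtain h where h: "mpf h" "\<forall>v s. f (v(0 := v 0 + s)) * f (v(0 := v 0 - s)) = h (case_nat (s\<^sup>2) v)"
    using mpf_even2[OF f(1)] by blast
  have mh: "mpf (\<lambda>v. h (\<lambda>i. case_nat (q m (v 1)) v i))"
  proof (rule mpf_subst[OF h(1)])
    fix i show "mpf (\<lambda>v. case_nat (q m (v 1)) v i)"
      using q[of m] by (cases i) (simp_all add: mpf.intros)
  qed
  have key: "\<forall>X R t. (\<forall>\<mu><Suc m. (t \<mu>)\<^sup>2 = q \<mu> R) \<longrightarrow>
     (\<Prod>\<sigma>\<in>sign_vectors (Suc m). X + (\<Sum>\<mu><Suc m. of_real (\<sigma> \<mu>) * t \<mu>)) = h (case_nat (q m R) (\<lambda>i::nat. if i = 0 then X else R))"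
  proof (intro allI impI)
    fix X R and t :: "nat \<Rightarrow> complex"
    assume tq: "\<forall>\<mu><Suc m. (t \<mu>)\<^sup>2 = q \<mu> R"
    define v where "v = (\<lambda>i::nat. if i = 0 then X else R)"
    have tq': "\<forall>\<mu><m. (t \<mu>)\<^sup>2 = q \<mu> R" using tq by simp
    have "(\<Prod>\<sigma>\<in>sign_vectors (Suc m). X + (\<Sum>\<mu><Suc m. of_real (\<sigma> \<mu>) * t \<mu>))
       = (\<Prod>\<sigma>\<in>sign_vectors m. ((X + t m) + (\<Sum>\<mu><m. of_real (\<sigma> \<mu>) * t \<mu>)) * ((X - t m) + (\<Sum>\<mu><m. of_real (\<sigma> \<mu>) * t \<mu>)))"
      unfolding sv_Suc sv_sum by (simp add: algebra_simps)
    also have "\<dots> = (\<Prod>\<sigma>\<in>sign_vectors m. (X + t m) + (\<Sum>\<mu><m. of_real (\<sigma> \<mu>) * t \<mu>)) * (\<Prod>\<sigma>\<in>sign_vectors m. (X - t m) + (\<Sum>\<mu><m. of_real (\<sigma> \<mu>) * t \<mu>))"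
      by (rule prod.distrib)
    also have "\<dots> = f (v(0 := v 0 + t m)) * f (v(0 := v 0 - t m))"
    proof -
      have A: "\<And>Y. (\<Prod>\<sigma>\<in>sign_vectors m. Y + (\<Sum>\<mu><m. of_real (\<sigma> \<mu>) * t \<mu>)) = f (\<lambda>i. if i = 0 then Y else R)"
        using f(2) tq' by blast
      have B: "\<And>Y. (\<lambda>i::nat. if i = 0 then Y else R) = v(0 := Y)" by (auto simp: v_def)
      show ?thesis unfolding A B by (simp add: v_def)
    qed
    also have "\<dots> = h (case_nat ((t m)\<^sup>2) v)" using h(2) by simp
    also have "\<dots> = h (case_nat (q m (v 1)) v)" using tq by (simp add: v_def[symmetric], simp add: v_def)
    finally show "(\<Prod>\<sigma>\<in>sign_vectors (Suc m). X + (\<Sum>\<mu><Suc m. of_real (\<sigma> \<mu>) * t \<mu>)) = h (case_nat (q m R) (\<lambda>i::nat. if i = 0 then X else R))"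
      by (simp add: v_def)
  qed
  show ?case
    by (rule exI[of _ "\<lambda>v. h (case_nat (q m (v 1)) v)"], rule conjI, rule mh, use key in simp)
qed

lemma gfun_poly:
  fixes n :: nat and \<omega> k :: "nat \<Rightarrow> real"
  shows "\<exists>p. \<forall>(R::complex) t. (\<forall>\<mu><n. (t \<mu>)\<^sup>2 = (of_real ((k \<mu>)\<^sup>2) * R - of_real ((\<omega> \<mu>)\<^sup>2)) / (of_nat n)\<^sup>2) \<longrightarrow>
      poly p R = (\<Prod>\<sigma>\<in>sign_vectors n. - R + (\<Sum>\<mu><n. of_real (\<sigma> \<mu>) * t \<mu>))"
proof -
  define q where "q = (\<lambda>\<mu> R. (of_real ((k \<mu>)\<^sup>2) * R - of_real ((\<omega> \<mu>)\<^sup>2)) / (of_nat n)\<^sup>2 :: complex)"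
  have qm: "\<And>\<mu>. mpf (\<lambda>v. q \<mu> (v 1))"
  proof -
    fix \<mu>
    have e: "(\<lambda>v. q \<mu> (v 1)) = (\<lambda>v. (\<lambda>v. of_real ((k \<mu>)\<^sup>2) / (of_nat n)\<^sup>2) v * (\<lambda>v. v 1) v + (\<lambda>v. - of_real ((\<omega> \<mu>)\<^sup>2) / (of_nat n)\<^sup>2) v)"
      by (auto simp: q_def field_simps diff_divide_distrib)
    show "mpf (\<lambda>v. q \<mu> (v 1))" unfolding e by (intro mpf.intros)
  qed
  obtain f where f: "mpf f" "\<forall>X R t. (\<forall>\<mu><n. (t \<mu>)\<^sup>2 = q \<mu> R) \<longrightarrow>
     (\<Prod>\<sigma>\<in>sign_vectors n. X + (\<Sum>\<mu><n. of_real (\<sigma> \<mu>) * t \<mu>)) = f (\<lambda>i. if i = 0 then X else R)"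
    using sv_prod_poly[of q n, OF qm] by blast
  have "mpf (\<lambda>v. f (\<lambda>i. (\<lambda>i v. if i = 0 then (-1) * v 0 else v 0) i v))"
  proof (rule mpf_subst[OF f(1)])
    fix i show "mpf (\<lambda>v. if i = 0 then (-1) * v 0 else v 0)"
      using mpf_mult[OF mpf_const[of "-1"] mpf_var[of 0]] by (cases "i = 0") (simp_all add: mpf.intros)
  qed
  then obtain p where p: "\<forall>R. f (\<lambda>i. if i = 0 then (-1) * R else R) = poly p R"
    using mpf_univ by fastforce
  show ?thesis
  proof (intro exI allI impI)
    fix R :: complex and t :: "nat \<Rightarrow> complex" assume "\<forall>\<mu><n. (t \<mu>)\<^sup>2 = (of_real ((k \<mu>)\<^sup>2) * R - of_real ((\<omega> \<mu>)\<^sup>2)) / (of_nat n)\<^sup>2"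
    then have "\<forall>\<mu><n. (t \<mu>)\<^sup>2 = q \<mu> R" by (simp add: q_def)
    then have "(\<Prod>\<sigma>\<in>sign_vectors n. -R + (\<Sum>\<mu><n. of_real (\<sigma> \<mu>) * t \<mu>)) = f (\<lambda>i. if i = 0 then -R else R)"
      using f(2) by blast
    then show "poly p R = (\<Prod>\<sigma>\<in>sign_vectors n. -R + (\<Sum>\<mu><n. of_real (\<sigma> \<mu>) * t \<mu>))"
    proof -
      have "(\<lambda>i::nat. if i = 0 then (-1) * R else R) = (\<lambda>i. if i = 0 then -R else R)" by auto
      then show ?thesis using p[rule_format, of R] \<open>_ = f _\<close> by simp
    qed
  qed
qed

lemma gfun_alt:
  "gfun n \<omega> k R = (\<Prod>\<sigma>\<in>sign_vectors n. - R + (\<Sum>\<mu><n. of_real (\<sigma> \<mu>) *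
         (csqrt (of_real ((k \<mu>)\<^sup>2) * R - of_real ((\<omega> \<mu>)\<^sup>2)) / of_nat n)))"
  unfolding gfun_def by (simp add: sum_distrib_left algebra_simps)

lemma csqrt_n_sq: "(csqrt z / of_nat n)\<^sup>2 = z / (of_nat n)\<^sup>2"
  by (simp add: power_divide)

lemma card_sv: "card (sign_vectors n) = 2 ^ n"
  unfolding sign_vectors_def by (simp add: card_PiE numeral_2_eq_2)

lemma finite_sv: "finite (sign_vectors n)"
  unfolding sign_vectors_def by (simp add: finite_PiE)

lemma degree_from_limit:
  fixes p :: "complex poly"
  assumes G: "((\<lambda>x::real. (of_real x)^N * poly p (of_real (1/x))) \<longlongrightarrow> 1) (at_right 0)"
  shows "degree p = N"
proof -
  define d where "d = degree p"
  have L0: "((\<lambda>x::real. poly (reflect_poly p) (of_real x)) \<longlongrightarrow> poly (reflect_poly p) (of_real 0)) (at_right 0)"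
    by (intro tendsto_intros)
  have ev: "eventually (\<lambda>x::real. poly (reflect_poly p) (of_real x) = (of_real x)^d * poly p (of_real (1/x))) (at_right 0)"
  proof (rule eventually_at_rightI[of 0 1])
    fix x :: real assume "x \<in> {0<..<1}"
    then have x0: "(of_real x :: complex) \<noteq> 0" by simp
    have "inverse (of_real x :: complex) = of_real (1/x)" by (simp add: of_real_inverse divide_inverse)
    then show "poly (reflect_poly p) (of_real x) = (of_real x)^d * poly p (of_real (1/x))"
      using poly_reflect_poly_nz[OF x0, of p] by (simp only: d_def)
  qed simp
  have L: "((\<lambda>x::real. (of_real x)^d * poly p (of_real (1/x))) \<longlongrightarrow> lead_coeff p) (at_right 0)"
    using Lim_transform_eventually[OF L0 ev] by (simp add: poly_0_coeff_0)
  have ofr: "((\<lambda>x::real. of_real x :: complex) \<longlongrightarrow> 0) (at_right 0)"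
    using tendsto_of_real[OF tendsto_ident_at[of "0::real" "{0<..}"]] by simp
  show ?thesis
  proof (rule ccontr)
    assume ne: "degree p \<noteq> N"
    show False
    proof (cases "d < N")
      case True
      have e2: "eventually (\<lambda>x::real. (of_real x :: complex)^(N-d) * ((of_real x)^d * poly p (of_real (1/x))) = (of_real x)^N * poly p (of_real (1/x))) (at_right 0)"
        using True by (intro always_eventually allI) (simp add: power_add[symmetric])
      have "((\<lambda>x::real. (of_real x :: complex)^(N-d) * ((of_real x)^d * poly p (of_real (1/x)))) \<longlongrightarrow> 0^(N-d) * lead_coeff p) (at_right 0)"
        by (intro tendsto_intros L ofr)
      then have lim0: "((\<lambda>x::real. (of_real x :: complex)^(N-d) * ((of_real x)^d * poly p (of_real (1/x)))) \<longlongrightarrow> 0) (at_right 0)"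
        using True by (simp add: power_0_left)
      have "((\<lambda>x::real. (of_real x)^N * poly p (of_real (1/x))) \<longlongrightarrow> 0) (at_right 0)"
        by (rule Lim_transform_eventually[OF lim0 e2])
      with G show False using tendsto_unique[OF trivial_limit_at_right_real] by fastforce
    next
      case False
      then have dN: "d > N" using ne d_def by simp
      have e2: "eventually (\<lambda>x::real. (of_real x :: complex)^(d-N) * ((of_real x)^N * poly p (of_real (1/x))) = (of_real x)^d * poly p (of_real (1/x))) (at_right 0)"
        using dN by (intro always_eventually allI) (simp add: power_add[symmetric])
      have "((\<lambda>x::real. (of_real x :: complex)^(d-N) * ((of_real x)^N * poly p (of_real (1/x)))) \<longlongrightarrow> 0^(d-N) * 1) (at_right 0)"
        by (intro tendsto_intros G ofr)
      then have lim0: "((\<lambda>x::real. (of_real x :: complex)^(d-N) * ((of_real x)^N * poly p (of_real (1/x)))) \<longlongrightarrow> 0) (at_right 0)"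
        using dN by (simp add: power_0_left)
      have "((\<lambda>x::real. (of_real x)^d * poly p (of_real (1/x))) \<longlongrightarrow> 0) (at_right 0)"
        by (rule Lim_transform_eventually[OF lim0 e2])
      then have "lead_coeff p = 0" using L tendsto_unique[OF trivial_limit_at_right_real] by blast
      then have "p = 0" by simp
      then show False using dN d_def by simp
    qed
  qed
qed

lemma R2_dvd:
  fixes p :: "complex poly"
  assumes b: "\<And>R. norm R \<le> 1 \<Longrightarrow> norm (poly p R) \<le> C * (norm R)\<^sup>2"
  shows "[:0,0,1:] dvd p"
proof -
  have "norm (poly p 0) \<le> 0" using b[of 0] by simp
  then have "poly p 0 = 0" by simp
  then obtain p1 where p1: "p = [:0,1:] * p1" using poly_eq_0_iff_dvd[of p 0] by (auto elim: dvdE)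
  have b1: "norm (poly p1 R) \<le> C * norm R" if "R \<noteq> 0" "norm R \<le> 1" for R
  proof -
    have e1: "norm R * norm (poly p1 R) = norm (poly p R)" by (simp add: p1 norm_mult)
    have e2: "C * (norm R)\<^sup>2 = norm R * (C * norm R)" by (simp add: power2_eq_square)
    have "norm R * norm (poly p1 R) \<le> norm R * (C * norm R)"
      using b[OF that(2)] e1 e2 by linarith
    then show ?thesis using that(1) by simp
  qed
  have "((\<lambda>R. poly p1 R) \<longlongrightarrow> 0) (at 0)"
  proof (rule Lim_null_comparison)
    show "eventually (\<lambda>R. norm (poly p1 R) \<le> C * norm R) (at (0::complex))"
      unfolding eventually_at by (rule exI[of _ 1]) (auto intro: b1)
    show "((\<lambda>R. C * norm R) \<longlongrightarrow> 0) (at (0::complex))"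
    proof -
      have "((\<lambda>R. C * norm R) \<longlongrightarrow> C * norm (0::complex)) (at (0::complex))" by (intro tendsto_intros)
      then show ?thesis by simp
    qed
  qed
  moreover have "((\<lambda>R. poly p1 R) \<longlongrightarrow> poly p1 0) (at 0)" by (intro tendsto_intros)
  ultimately have "poly p1 0 = 0" using tendsto_unique[OF trivial_limit_at] by blast
  then obtain p2 where p2: "p1 = [:0,1:] * p2" using poly_eq_0_iff_dvd[of p1 0] by (auto elim: dvdE)
  have "p = [:0,0,1:] * p2" by (simp add: p1 p2 mult.assoc[symmetric])
  then show ?thesis by (rule dvdI)
qed


lemma csqrt_sub1: "norm (csqrt z - 1) \<le> norm (z - 1)"
proof -
  have e: "(csqrt z - 1) * (csqrt z + 1) = z - 1"
    using power2_csqrt[of z] by (simp add: algebra_simps power2_eq_square)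
  have "1 \<le> Re (csqrt z + 1)" using Re_csqrt[of z] by simp
  also have "\<dots> \<le> norm (csqrt z + 1)" by (rule complex_Re_le_cmod)
  finally have "norm (csqrt z - 1) * 1 \<le> norm (csqrt z - 1) * norm (csqrt z + 1)"
    by (intro mult_left_mono) auto
  also have "\<dots> = norm (z - 1)" by (simp add: e norm_mult[symmetric])
  finally show ?thesis by simp
qed

lemma sv_abs: "\<sigma> \<in> sign_vectors n \<Longrightarrow> \<mu> < n \<Longrightarrow> \<bar>\<sigma> \<mu>\<bar> = 1"
proof -
  assume a: "\<sigma> \<in> sign_vectors n" "\<mu> < n"
  then have "\<sigma> \<mu> = -1 \<or> \<sigma> \<mu> = 1" unfolding sign_vectors_def by (auto simp: PiE_iff)
  then show ?thesis by auto
qed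

lemma sv_sum_bound:
  fixes x :: "nat \<Rightarrow> complex"
  assumes "\<sigma> \<in> sign_vectors n" "n \<ge> 1"
  shows "norm (\<Sum>\<mu><n. of_real (\<sigma> \<mu>) * (x \<mu> / of_nat n)) \<le> (\<Sum>\<mu><n. norm (x \<mu>))"
proof -
  have "norm (\<Sum>\<mu><n. of_real (\<sigma> \<mu>) * (x \<mu> / of_nat n)) \<le> (\<Sum>\<mu><n. norm (of_real (\<sigma> \<mu>) * (x \<mu> / of_nat n)))"
    by (rule norm_sum)
  also have "\<dots> \<le> (\<Sum>\<mu><n. norm (x \<mu>))"
  proof (rule sum_mono)
    fix \<mu> assume "\<mu> \<in> {..<n}"
    then have "\<bar>\<sigma> \<mu>\<bar> = 1" using sv_abs assms(1) by auto
    moreover have "norm (x \<mu>) / real n \<le> norm (x \<mu>)"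
    proof -
      have "norm (x \<mu>) * 1 \<le> norm (x \<mu>) * real n" using assms(2) by (intro mult_left_mono) auto
      then show ?thesis using assms(2) by (simp add: divide_le_eq)
    qed
    ultimately show "norm (of_real (\<sigma> \<mu>) * (x \<mu> / of_nat n)) \<le> norm (x \<mu>)"
      by (simp add: norm_mult norm_divide)
  qed
  finally show ?thesis .
qed

lemma sum_sign_const:
  fixes \<omega> \<sigma> :: "nat \<Rightarrow> real"
  assumes "\<And>\<mu>. \<mu> < n \<Longrightarrow> \<omega> \<mu> \<noteq> 0 \<Longrightarrow> \<sigma> \<mu> = c"
  shows "(\<Sum>\<mu><n. \<sigma> \<mu> * \<omega> \<mu>) = c * (\<Sum>\<mu><n. \<omega> \<mu>)"
proof -
  have "(\<Sum>\<mu><n. \<sigma> \<mu> * \<omega> \<mu>) = (\<Sum>\<mu><n. c * \<omega> \<mu>)"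
  proof (rule sum.cong)
    fix \<mu> assume "\<mu> \<in> {..<n}"
    then show "\<sigma> \<mu> * \<omega> \<mu> = c * \<omega> \<mu>" by (cases "\<omega> \<mu> = 0") (auto simp: assms)
  qed simp
  then show ?thesis by (simp add: sum_distrib_left)
qed

lemma le_sqrt_small: "0 \<le> x \<Longrightarrow> x \<le> 1 \<Longrightarrow> x \<le> sqrt (x::real)"
  by (rule real_le_rsqrt) (simp add: power2_eq_square mult_left_le)

lemma prod_bound:
  fixes F :: "'a \<Rightarrow> complex"
  assumes "finite S" "T \<subseteq> S" "\<And>x. x \<in> S \<Longrightarrow> norm (F x) \<le> B" "\<And>x. x \<in> T \<Longrightarrow> norm (F x) \<le> e"
  shows "norm (prod F S) \<le> e ^ card T * B ^ card (S - T)"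
proof -
  have "prod F S = prod F (S - T) * prod F T" by (rule prod.subset_diff[OF assms(2,1)])
  then have "norm (prod F S) = (\<Prod>x\<in>T. norm (F x)) * (\<Prod>x\<in>S - T. norm (F x))"
    by (simp add: norm_mult prod_norm)
  also have "\<dots> \<le> (\<Prod>x\<in>T. e) * (\<Prod>x\<in>S - T. B)"
  proof (rule mult_mono')
    show "(\<Prod>x\<in>T. norm (F x)) \<le> (\<Prod>x\<in>T. e)"
      by (rule prod_mono) (use assms(2,4) in auto)
    show "(\<Prod>x\<in>S - T. norm (F x)) \<le> (\<Prod>x\<in>S - T. B)"
      by (rule prod_mono) (use assms(3) in auto)
  qed (simp_all add: prod_nonneg)
  also have "\<dots> = e ^ card T * B ^ card (S - T)" by simp
  finally show ?thesis .
qed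

lemma small_bound:
  fixes n :: nat and \<omega> k :: "nat \<Rightarrow> real" and p :: "complex poly"
  assumes n2: "n \<ge> 2" and kpos: "\<And>\<mu>. \<mu> < n \<Longrightarrow> k \<mu> > 0" and IC1: "(\<Sum>\<mu><n. \<omega> \<mu>) = 0"
    and P: "\<forall>(R::complex) t. (\<forall>\<mu><n. (t \<mu>)\<^sup>2 = (of_real ((k \<mu>)\<^sup>2) * R - of_real ((\<omega> \<mu>)\<^sup>2)) / (of_nat n)\<^sup>2) \<longrightarrow>
      poly p R = (\<Prod>\<sigma>\<in>sign_vectors n. - R + (\<Sum>\<mu><n. of_real (\<sigma> \<mu>) * t \<mu>))"
  shows "\<exists>C. \<forall>R. norm R \<le> 1 \<longrightarrow> norm (poly p R) \<le> C * (norm R)\<^sup>2"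
proof -
  define a where "a = (\<lambda>\<mu> R. if \<omega> \<mu> = 0 then csqrt (of_real ((k \<mu>)\<^sup>2) * R)
     else \<i> * of_real (\<omega> \<mu>) * csqrt (1 - of_real ((k \<mu>)\<^sup>2) * R / of_real ((\<omega> \<mu>)\<^sup>2)))"
  define d where "d = (\<lambda>\<mu> R. a \<mu> R - \<i> * of_real (\<omega> \<mu>))"
  define F where "F = (\<lambda>\<sigma> R. - R + (\<Sum>\<mu><n. of_real (\<sigma> \<mu>) * (a \<mu> R / of_nat n)))"
  define S where "S = sign_vectors n"
  have n1: "n \<ge> 1" using n2 by simp
  have asq: "(a \<mu> R)\<^sup>2 = of_real ((k \<mu>)\<^sup>2) * R - of_real ((\<omega> \<mu>)\<^sup>2)" for \<mu> R
  proof (cases "\<omega> \<mu> = 0")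
    case True then show ?thesis by (simp add: a_def)
  next
    case False
    then have "(of_real (\<omega> \<mu>) :: complex) \<noteq> 0" by simp
    then show ?thesis using False
      by (simp add: a_def power_mult_distrib field_simps)
  qed
  have pF: "poly p R = (\<Prod>\<sigma>\<in>S. F \<sigma> R)" for R
    using P[rule_format, of "\<lambda>\<mu>. a \<mu> R / of_nat n" R] asq by (simp add: F_def S_def power_divide)
  have d2: "norm (d \<mu> R) \<le> (k \<mu>)\<^sup>2 / \<bar>\<omega> \<mu>\<bar> * norm R" if "\<omega> \<mu> \<noteq> 0" for \<mu> R
  proof -
    define X where "X = of_real ((k \<mu>)\<^sup>2) * R / of_real ((\<omega> \<mu>)\<^sup>2)"
    have "d \<mu> R = \<i> * of_real (\<omega> \<mu>) * (csqrt (1 - X) - 1)"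
      using that by (simp add: d_def a_def X_def algebra_simps)
    then have "norm (d \<mu> R) = \<bar>\<omega> \<mu>\<bar> * norm (csqrt (1 - X) - 1)" by (simp add: norm_mult)
    also have "\<dots> \<le> \<bar>\<omega> \<mu>\<bar> * norm ((1 - X) - 1)" by (intro mult_left_mono csqrt_sub1) auto
    also have "\<dots> = \<bar>\<omega> \<mu>\<bar> * ((k \<mu>)\<^sup>2 * norm R / (\<omega> \<mu>)\<^sup>2)"
      by (simp add: X_def norm_mult norm_divide norm_power)
    also have "\<dots> = (k \<mu>)\<^sup>2 / \<bar>\<omega> \<mu>\<bar> * norm R"
      using that by (simp add: field_simps power2_eq_square)
    finally show ?thesis .
  qed
  have d1: "norm (d \<mu> R) \<le> k \<mu> * sqrt (norm R) + (k \<mu>)\<^sup>2 / \<bar>\<omega> \<mu>\<bar> * norm R" if "\<mu> < n" for \<mu> R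
  proof (cases "\<omega> \<mu> = 0")
    case True
    have "norm (d \<mu> R) = sqrt ((k \<mu>)\<^sup>2 * norm R)" using True by (simp add: d_def a_def norm_mult norm_power)
    also have "\<dots> = k \<mu> * sqrt (norm R)" using kpos[OF that] by (simp add: real_sqrt_mult)
    finally show ?thesis using True by simp
  next
    case False
    have "0 \<le> k \<mu> * sqrt (norm R)" using kpos[OF that] by simp
    then show ?thesis using d2[OF False, of R] by linarith
  qed
  have Fsum0: "norm (F \<sigma> R) \<le> norm R + (\<Sum>\<mu><n. norm (d \<mu> R))"
    if "\<sigma> \<in> S" "(\<Sum>\<mu><n. \<sigma> \<mu> * \<omega> \<mu>) = 0" for \<sigma> R
  proof -
    have "(\<Sum>\<mu><n. of_real (\<sigma> \<mu>) * (a \<mu> R / of_nat n)) =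
        (\<Sum>\<mu><n. of_real (\<sigma> \<mu>) * (d \<mu> R / of_nat n)) + \<i> * of_real (\<Sum>\<mu><n. \<sigma> \<mu> * \<omega> \<mu>) / of_nat n"
      by (simp add: d_def sum.distrib[symmetric] sum_divide_distrib sum_distrib_left algebra_simps diff_divide_distrib)
    also have "\<dots> = (\<Sum>\<mu><n. of_real (\<sigma> \<mu>) * (d \<mu> R / of_nat n))" using that(2) by simp
    finally have e: "(\<Sum>\<mu><n. of_real (\<sigma> \<mu>) * (a \<mu> R / of_nat n)) = (\<Sum>\<mu><n. of_real (\<sigma> \<mu>) * (d \<mu> R / of_nat n))" .
    have "norm (F \<sigma> R) \<le> norm (- R) + norm (\<Sum>\<mu><n. of_real (\<sigma> \<mu>) * (a \<mu> R / of_nat n))"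
      unfolding F_def by (rule norm_triangle_ineq)
    also have "\<dots> \<le> norm R + (\<Sum>\<mu><n. norm (d \<mu> R))"
      unfolding e using sv_sum_bound[of \<sigma> n "\<lambda>\<mu>. d \<mu> R"] that(1) n1 by (simp add: S_def)
    finally show ?thesis .
  qed
  define B where "B = 1 + (\<Sum>\<mu><n. k \<mu> + (k \<mu>)\<^sup>2 / \<bar>\<omega> \<mu>\<bar> + \<bar>\<omega> \<mu>\<bar>)"
  have Fgen: "norm (F \<sigma> R) \<le> B" if "\<sigma> \<in> S" "norm R \<le> 1" for \<sigma> R
  proof -
    have sq: "sqrt (norm R) \<le> 1" using that(2) by simp
    have "norm (F \<sigma> R) \<le> norm (- R) + norm (\<Sum>\<mu><n. of_real (\<sigma> \<mu>) * (a \<mu> R / of_nat n))"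
      unfolding F_def by (rule norm_triangle_ineq)
    also have "\<dots> \<le> 1 + (\<Sum>\<mu><n. norm (a \<mu> R))"
      using sv_sum_bound[of \<sigma> n "\<lambda>\<mu>. a \<mu> R"] that n1 by (simp add: S_def)
    also have "\<dots> \<le> B" unfolding B_def
    proof (intro add_left_mono sum_mono)
      fix \<mu> assume "\<mu> \<in> {..<n}"
      then have \<mu>: "\<mu> < n" by simp
      have "norm (a \<mu> R) \<le> norm (d \<mu> R) + \<bar>\<omega> \<mu>\<bar>"
        unfolding d_def using norm_triangle_ineq[of "a \<mu> R - \<i> * of_real (\<omega> \<mu>)" "\<i> * of_real (\<omega> \<mu>)"]
        by (simp add: norm_mult)
      also have "\<dots> \<le> k \<mu> * sqrt (norm R) + (k \<mu>)\<^sup>2 / \<bar>\<omega> \<mu>\<bar> * norm R + \<bar>\<omega> \<mu>\<bar>"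
        using d1[OF \<mu>, of R] by simp
      also have "\<dots> \<le> k \<mu> + (k \<mu>)\<^sup>2 / \<bar>\<omega> \<mu>\<bar> + \<bar>\<omega> \<mu>\<bar>"
      proof -
        have "k \<mu> * sqrt (norm R) \<le> k \<mu> * 1" using kpos[OF \<mu>] sq by (intro mult_left_mono) auto
        moreover have "(k \<mu>)\<^sup>2 / \<bar>\<omega> \<mu>\<bar> * norm R \<le> (k \<mu>)\<^sup>2 / \<bar>\<omega> \<mu>\<bar> * 1"
          using that(2) by (intro mult_left_mono) auto
        ultimately show ?thesis by simp
      qed
      finally show "norm (a \<mu> R) \<le> k \<mu> + (k \<mu>)\<^sup>2 / \<bar>\<omega> \<mu>\<bar> + \<bar>\<omega> \<mu>\<bar>" .
    qed
    finally show ?thesis .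
  qed
  define one :: "nat \<Rightarrow> real" where "one = (\<lambda>\<mu>. if \<mu> < n then 1 else undefined)"
  define mone :: "nat \<Rightarrow> real" where "mone = (\<lambda>\<mu>. if \<mu> < n then -1 else undefined)"
  have one_S: "one \<in> S" "mone \<in> S" unfolding S_def sign_vectors_def one_def mone_def
    by (auto simp: PiE_iff extensional_def)
  have finS: "finite S" unfolding S_def by (rule finite_sv)
  have neq: "\<And>f g i. f i \<noteq> g i \<Longrightarrow> f \<noteq> g" by auto
  show ?thesis
  proof (cases "\<forall>\<mu><n. \<omega> \<mu> \<noteq> 0")
    case True
    define K where "K = (\<Sum>\<mu><n. (k \<mu>)\<^sup>2 / \<bar>\<omega> \<mu>\<bar>)"
    define T where "T = {one, mone}"
    have cT: "card T = 2" unfolding T_def using neq[of one 0 mone] n1 by (simp add: one_def mone_def)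
    have TS: "T \<subseteq> S" using one_S by (simp add: T_def)
    have Fsmall: "norm (F \<sigma> R) \<le> (1 + K) * norm R" if "\<sigma> \<in> T" for \<sigma> R
    proof -
      have s0: "(\<Sum>\<mu><n. \<sigma> \<mu> * \<omega> \<mu>) = 0"
      proof -
        have "\<exists>c. \<forall>\<mu><n. \<sigma> \<mu> = c" using that by (auto simp: T_def one_def mone_def)
        then obtain c where "\<forall>\<mu><n. \<sigma> \<mu> = c" by blast
        then show ?thesis using sum_sign_const[of n \<omega> \<sigma> c] IC1 by simp
      qed
      have "norm (F \<sigma> R) \<le> norm R + (\<Sum>\<mu><n. norm (d \<mu> R))" using Fsum0[OF _ s0] that TS by blast
      also have "\<dots> \<le> norm R + (\<Sum>\<mu><n. (k \<mu>)\<^sup>2 / \<bar>\<omega> \<mu>\<bar> * norm R)"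
        using d2 True by (intro add_left_mono sum_mono) auto
      also have "\<dots> = (1 + K) * norm R" by (simp add: K_def sum_distrib_right distrib_right)
      finally show ?thesis .
    qed
    show ?thesis
    proof (intro exI allI impI)
      fix R :: complex assume R1: "norm R \<le> 1"
      have "norm (poly p R) \<le> ((1 + K) * norm R) ^ card T * B ^ card (S - T)"
        unfolding pF by (rule prod_bound[OF finS TS]) (use Fgen[OF _ R1] Fsmall in auto)
      also have "\<dots> = ((1 + K)^2 * B ^ card (S - T)) * (norm R)\<^sup>2"
        by (simp add: cT power_mult_distrib)
      finally show "norm (poly p R) \<le> ((1 + K)^2 * B ^ card (S - T)) * (norm R)\<^sup>2" .
    qed
  next
    case False
    then obtain \<mu>0 where \<mu>0: "\<mu>0 < n" "\<omega> \<mu>0 = 0" by auto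
    define \<mu>1 where "\<mu>1 = (if \<mu>0 = 0 then 1 else 0::nat)"
    have \<mu>1: "\<mu>1 < n" "\<mu>1 \<noteq> \<mu>0" using n2 by (auto simp: \<mu>1_def)
    define f1 where "f1 = one(\<mu>0 := -1)"
    define f2 where "f2 = mone(\<mu>0 := 1)"
    have f_S: "f1 \<in> S" "f2 \<in> S" unfolding S_def sign_vectors_def f1_def f2_def one_def mone_def
      using \<mu>0 by (auto simp: PiE_iff extensional_def)
    define K where "K = (\<Sum>\<mu><n. k \<mu> + (k \<mu>)\<^sup>2 / \<bar>\<omega> \<mu>\<bar>)"
    define T where "T = {one, mone, f1, f2}"
    have v: "one \<mu>0 = 1" "mone \<mu>0 = -1" "f1 \<mu>0 = -1" "f2 \<mu>0 = 1"
      "one \<mu>1 = 1" "mone \<mu>1 = -1" "f1 \<mu>1 = 1" "f2 \<mu>1 = -1"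
      using \<mu>0 \<mu>1 by (simp_all add: one_def mone_def f1_def f2_def)
    have ne: "one \<noteq> mone" "one \<noteq> f1" "one \<noteq> f2" "mone \<noteq> f1" "mone \<noteq> f2" "f1 \<noteq> f2"
      using neq[of one \<mu>0 mone] neq[of one \<mu>0 f1] neq[of one \<mu>1 f2] neq[of mone \<mu>1 f1]
        neq[of mone \<mu>0 f2] neq[of f1 \<mu>0 f2] v by simp_all
    have cT: "card T = 4" unfolding T_def using ne by simp
    have TS: "T \<subseteq> S" using one_S f_S by (simp add: T_def)
    have Fsmall: "norm (F \<sigma> R) \<le> (1 + K) * sqrt (norm R)" if "\<sigma> \<in> T" "norm R \<le> 1" for \<sigma> R
    proof -
      have s0: "(\<Sum>\<mu><n. \<sigma> \<mu> * \<omega> \<mu>) = 0"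
      proof -
        have "\<exists>c. \<forall>\<mu><n. \<omega> \<mu> \<noteq> 0 \<longrightarrow> \<sigma> \<mu> = c" using that(1) \<mu>0
          by (auto simp: T_def one_def mone_def f1_def f2_def)
        then obtain c where "\<forall>\<mu><n. \<omega> \<mu> \<noteq> 0 \<longrightarrow> \<sigma> \<mu> = c" by blast
        then show ?thesis using sum_sign_const[of n \<omega> \<sigma> c] IC1 by simp
      qed
      have sq: "norm R \<le> sqrt (norm R)" using that(2) by (intro le_sqrt_small) auto
      have "norm (F \<sigma> R) \<le> norm R + (\<Sum>\<mu><n. norm (d \<mu> R))" using Fsum0[OF _ s0] that TS by blast
      also have "\<dots> \<le> sqrt (norm R) + (\<Sum>\<mu><n. (k \<mu> + (k \<mu>)\<^sup>2 / \<bar>\<omega> \<mu>\<bar>) * sqrt (norm R))"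
      proof (intro add_mono sq sum_mono)
        fix \<mu> assume "\<mu> \<in> {..<n}"
        then have \<mu>: "\<mu> < n" by simp
        have "(k \<mu>)\<^sup>2 / \<bar>\<omega> \<mu>\<bar> * norm R \<le> (k \<mu>)\<^sup>2 / \<bar>\<omega> \<mu>\<bar> * sqrt (norm R)"
          using sq by (intro mult_left_mono) auto
        then show "norm (d \<mu> R) \<le> (k \<mu> + (k \<mu>)\<^sup>2 / \<bar>\<omega> \<mu>\<bar>) * sqrt (norm R)"
          using d1[OF \<mu>, of R] by (simp add: algebra_simps)
      qed
      also have "\<dots> = (1 + K) * sqrt (norm R)" by (simp add: K_def sum_distrib_right distrib_right)
      finally show ?thesis .
    qed
    show ?thesis
    proof (intro exI allI impI)
      fix R :: complex assume R1: "norm R \<le> 1"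
      have "norm (poly p R) \<le> ((1 + K) * sqrt (norm R)) ^ card T * B ^ card (S - T)"
        unfolding pF by (rule prod_bound[OF finS TS]) (use Fgen[OF _ R1] Fsmall[OF _ R1] in auto)
      also have "\<dots> = ((1 + K)^4 * B ^ card (S - T)) * (norm R)\<^sup>2"
      proof -
        have "(sqrt (norm R))^4 = (norm R)\<^sup>2"
          by (metis norm_ge_zero num_double numeral_times_numeral power2_eq_square power_mult real_sqrt_pow2 power2_eq_square)
        then show ?thesis by (simp add: cT power_mult_distrib)
      qed
      finally show "norm (poly p R) \<le> ((1 + K)^4 * B ^ card (S - T)) * (norm R)\<^sup>2" .
    qed
  qed
qed


lemma xt0:
  fixes a b :: real
  assumes "a \<ge> 0" "b \<ge> 0"
  shows "((\<lambda>x::real. of_real x * csqrt (of_real a * of_real (1/x) - of_real b)) \<longlongrightarrow> 0) (at_right 0)"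
proof (rule Lim_null_comparison)
  show "eventually (\<lambda>x. norm (of_real x * csqrt (of_real a * of_real (1/x) - of_real b)) \<le> sqrt (a * x + b * x\<^sup>2)) (at_right (0::real))"
  proof (rule eventually_at_rightI[of 0 1])
    fix x :: real assume "x \<in> {0<..<1}"
    then have x: "x > 0" by simp
    have "norm (of_real x * csqrt (of_real a * of_real (1/x) - of_real b)) = x * sqrt \<bar>a / x - b\<bar>"
    proof -
      have z: "(of_real a * of_real (1/x) - of_real b :: complex) = of_real (a/x - b)" by simp
      show ?thesis unfolding z using x by (simp only: norm_mult norm_csqrt norm_of_real abs_of_pos)
    qed
    also have "\<dots> \<le> x * sqrt (a / x + b)"
    proof -
      have "0 \<le> a / x" using x assms by simp
      then have "\<bar>a / x - b\<bar> \<le> a / x + b" using assms by linarith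
      then show ?thesis using x by (intro mult_left_mono real_sqrt_le_mono) auto
    qed
    also have "\<dots> = sqrt (x\<^sup>2 * (a / x + b))" using x by (simp add: real_sqrt_mult)
    also have "\<dots> = sqrt (a * x + b * x\<^sup>2)" using x by (simp add: field_simps power2_eq_square)
    finally show "norm (of_real x * csqrt (of_real a * of_real (1/x) - of_real b)) \<le> sqrt (a * x + b * x\<^sup>2)" .
  qed simp
  have "((\<lambda>x::real. sqrt (a * x + b * x\<^sup>2)) \<longlongrightarrow> sqrt (a * 0 + b * 0\<^sup>2)) (at_right 0)"
    by (intro tendsto_intros)
  then show "((\<lambda>x::real. sqrt (a * x + b * x\<^sup>2)) \<longlongrightarrow> 0) (at_right 0)" by simp
qed

lemma big_limit:
  fixes n :: nat and \<omega> k :: "nat \<Rightarrow> real" and p :: "complex poly"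
  assumes n1: "n \<ge> 1"
    and P: "\<forall>(R::complex) t. (\<forall>\<mu><n. (t \<mu>)\<^sup>2 = (of_real ((k \<mu>)\<^sup>2) * R - of_real ((\<omega> \<mu>)\<^sup>2)) / (of_nat n)\<^sup>2) \<longrightarrow>
      poly p R = (\<Prod>\<sigma>\<in>sign_vectors n. - R + (\<Sum>\<mu><n. of_real (\<sigma> \<mu>) * t \<mu>))"
  shows "((\<lambda>x::real. (of_real x)^(2^n) * poly p (of_real (1/x))) \<longlongrightarrow> 1) (at_right 0)"
proof -
  define c where "c = (\<lambda>\<mu> (x::real). csqrt (of_real ((k \<mu>)\<^sup>2) * of_real (1/x) - of_real ((\<omega> \<mu>)\<^sup>2)))"
  define H where "H = (\<lambda>x::real. \<Prod>\<sigma>\<in>sign_vectors n. -1 + (\<Sum>\<mu><n. of_real (\<sigma> \<mu>) * ((of_real x * c \<mu> x) / of_nat n)))"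
  have ev: "eventually (\<lambda>x. H x = (of_real x)^(2^n) * poly p (of_real (1/x))) (at_right (0::real))"
  proof (rule eventually_at_rightI[of 0 1])
    fix x :: real assume "x \<in> {0<..<1}"
    then have x: "x > 0" by simp
    have "poly p (of_real (1/x)) = (\<Prod>\<sigma>\<in>sign_vectors n. - of_real (1/x) + (\<Sum>\<mu><n. of_real (\<sigma> \<mu>) * (c \<mu> x / of_nat n)))"
      using P[rule_format, of "\<lambda>\<mu>. c \<mu> x / of_nat n" "of_real (1/x)"] by (simp add: c_def power_divide)
    moreover have "(of_real x :: complex)^(2^n) = (\<Prod>\<sigma>\<in>sign_vectors n. of_real x)"
      by (simp add: card_sv)
    ultimately have "(of_real x)^(2^n) * poly p (of_real (1/x)) = (\<Prod>\<sigma>\<in>sign_vectors n. of_real x * (- of_real (1/x) + (\<Sum>\<mu><n. of_real (\<sigma> \<mu>) * (c \<mu> x / of_nat n))))"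
      by (simp add: prod.distrib)
    also have "\<dots> = H x" unfolding H_def
    proof (rule prod.cong)
      fix \<sigma>
      have "(of_real x :: complex) * (- of_real (1/x)) = -1" using x by (simp add: field_simps)
      then show "of_real x * (- of_real (1/x) + (\<Sum>\<mu><n. of_real (\<sigma> \<mu>) * (c \<mu> x / of_nat n))) =
          -1 + (\<Sum>\<mu><n. of_real (\<sigma> \<mu>) * ((of_real x * c \<mu> x) / of_nat n))"
        by (simp add: distrib_left sum_distrib_left algebra_simps)
    qed simp
    finally show "H x = (of_real x)^(2^n) * poly p (of_real (1/x))" by simp
  qed simp
  have lim: "(H \<longlongrightarrow> (\<Prod>\<sigma>\<in>sign_vectors n. -1 + (\<Sum>\<mu><n. of_real (\<sigma> \<mu>) * (0 / of_nat n)))) (at_right 0)"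
    unfolding H_def
  proof (intro tendsto_prod tendsto_add tendsto_const tendsto_sum tendsto_mult tendsto_divide)
    fix \<mu>
    show "((\<lambda>x. of_real x * c \<mu> x) \<longlongrightarrow> 0) (at_right 0)"
      unfolding c_def by (rule xt0) auto
  qed simp_all
  have "(\<Prod>\<sigma>\<in>sign_vectors n. -1 + (\<Sum>\<mu><n. of_real (\<sigma> \<mu>) * (0 / of_nat n))) = (-1::complex) ^ (2^n)"
    by (simp add: card_sv)
  also have "\<dots> = 1" using n1 by (simp add: power_minus_even)
  finally have "(H \<longlongrightarrow> 1) (at_right 0)" using lim by simp
  then show ?thesis by (rule Lim_transform_eventually) (rule ev)
qed


theorem proposition3:
  fixes n :: nat and \<omega> k :: "nat \<Rightarrow> real"
  assumes "n \<ge> 2"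
    and "\<And>\<mu>. \<mu> < n \<Longrightarrow> k \<mu> > 0"
    and IC1: "(\<Sum>\<mu><n. \<omega> \<mu>) = 0"
    and IC2: "\<exists>\<mu><n. \<omega> \<mu> \<noteq> 0"
    and IC3: "\<And>i j. i \<le> j \<Longrightarrow> j < n \<Longrightarrow> \<bar>\<omega> i / k i\<bar> \<le> \<bar>\<omega> j / k j\<bar>"
  shows "\<exists>p :: complex poly. degree p = 2 ^ n \<and> (\<forall>R. gfun n \<omega> k R = poly p R) \<and>
           (\<exists>h :: complex poly. degree h = 2 ^ n - 2 \<and> (\<forall>R. gfun n \<omega> k R = R\<^sup>2 * poly h R))"
proof -
  obtain p where P: "\<forall>(R::complex) t. (\<forall>\<mu><n. (t \<mu>)\<^sup>2 = (of_real ((k \<mu>)\<^sup>2) * R - of_real ((\<omega> \<mu>)\<^sup>2)) / (of_nat n)\<^sup>2) \<longrightarrow>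
      poly p R = (\<Prod>\<sigma>\<in>sign_vectors n. - R + (\<Sum>\<mu><n. of_real (\<sigma> \<mu>) * t \<mu>))"
    using gfun_poly[of n k \<omega>] by blast
  have g: "gfun n \<omega> k R = poly p R" for R
    using P[rule_format, of "\<lambda>\<mu>. csqrt (of_real ((k \<mu>)\<^sup>2) * R - of_real ((\<omega> \<mu>)\<^sup>2)) / of_nat n" R]
    by (simp add: gfun_alt power_divide)
  have deg: "degree p = 2 ^ n"
    by (rule degree_from_limit[OF big_limit[OF _ P]]) (use assms(1) in simp)
  obtain C where C: "\<forall>R. norm R \<le> 1 \<longrightarrow> norm (poly p R) \<le> C * (norm R)\<^sup>2"
    using small_bound[OF assms(1) assms(2) IC1 P] by blast
  have "[:0,0,1:] dvd p" by (rule R2_dvd[of p C]) (use C in auto)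
  then obtain h where ph: "p = [:0,0,1:] * h" by (auto elim: dvdE)
  have "p \<noteq> 0" using deg by (intro notI) simp
  then have "h \<noteq> 0" using ph by auto
  then have "degree p = 2 + degree h" unfolding ph by (subst degree_mult_eq) auto
  then have dh: "degree h = 2 ^ n - 2" using deg by simp
  have "gfun n \<omega> k R = R\<^sup>2 * poly h R" for R unfolding g ph by (simp add: power2_eq_square)
  then show ?thesis using deg g dh by blast
qed

end
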